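(* Let $N\in\mathbb{N}$, $\Lambda\subseteq P_N$, $N(\Lambda):=N-|\Lambda|$. (i) For any $\lambda\subseteq P_{N(\Lambda)}$, $\pi_\lambda\circ\pi_\Lambda=\pi_{\varphi(\lambda)\cup\Lambda}$, where $\varphi$ is the unique strictly increasing bijection $P_{N(\Lambda)}\to P_N\smallsetminus\Lambda$. (ii) $\pi_\Lambda:\mathbb{D}_N\to\mathbb{D}_{N(\Lambda)}$ is surjective, and its restriction to $\mathcal{D}_N$ induces a continuous surjective map $\pi_\Lambda:\mathcal{D}_N\to\mathcal{D}_{N(\Lambda)}$ that sends $\{(w,a,\theta)\in\mathcal{D}_N: a^{-1}[0]=\Lambda\}$ onto $\mathcal{D}^\circ_{N(\Lambda)}$. (iii) The function $\mathrm{Re}[\pi]:\mathbb{D}_N\to\mathbb{R}$, $\mathrm{Re}[\pi](w,a,\theta):=\mathrm{Re}(\pi(w,a,\theta))$, is continuous and surjective.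
   Context: $\mathbb{N}=\{0,1,\dots\}$, $P_N=\{1,\dots,N\}$ ($P_0=\emptyset$); vectors $v\in\mathbb{C}^N$ are functions on $P_N$, $v^{-1}[S]=\{\ell:v_\ell\in S\}$; $\mathrm{Tr}(v,\Lambda):=\sum_{\ell\in\Lambda}v_\ell$. $\mathcal{C}:=\{z:\mathrm{Re}(z)>0\text{ or }z\in i\mathbb{R}_{>0}\}$, $\mathcal{C}^\circ$ the open right half-plane, $\mathbb{R}^*=\mathbb{R}\smallsetminus\{0\}$. For $N\ge1$: $\mathbb{D}_N:=\{(w,a,\theta)\in\mathbb{C}\times\mathbb{C}^N\times\mathbb{R}^N:a^{-1}[0]\subseteq\theta^{-1}[\mathbb{R}\smallsetminus\mathbb{Z}]\}$, $\pi(w,a,\theta):=w-\mathrm{Tr}(a,a^{-1}[-\mathcal{C}])$, $\mathcal{D}_N:=\{(w,a,\theta)\in\mathbb{D}_N:\pi(w,a,\theta)\in\mathcal{C}^\circ,\ a\in(\mathbb{C}\smallsetminus i\mathbb{R}^* )^N\}$, and $\mathcal{D}_N^\circ$ is its interior. For $N=0$: $\mathbb{D}_0:=\mathbb{C}$, $\mathcal{D}_0:=\{w:\mathrm{Re}(w)>0\}$ (open). Projections $\pi_\Lambda=\pi_{\Lambda,N}:\mathbb{D}_N\to\mathbb{D}_{N(\Lambda)}$: if $\Lambda=\emptyset$, the identity; if $\Lambda=P_N\ne\emptyset$, $\pi_\Lambda=\pi$; if $\Lambda$ is a nonempty proper subset, $\pi_\Lambda(w,a,\theta):=(w-\mathrm{Tr}(a,\Lambda\cap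 a^{-1}[-\mathcal{C}]),\hat a_\Lambda,\hat\theta_\Lambda)$, where $\hat v_\Lambda:=v\circ\varphi\in\mathbb{C}^{N(\Lambda)}$ with $\varphi$ the strictly increasing bijection $P_{N(\Lambda)}\to P_N\smallsetminus\Lambda$. *)

theory Defs
  imports "HOL-Analysis.Analysis"
begin

text \<open>Points of \<open>\<complex> \<times> \<complex>^N \<times> \<real>^N\<close> are represented as triples \<open>(w, a, \<theta>)\<close> with
  \<open>a :: nat \<Rightarrow> complex\<close>, \<open>\<theta> :: nat \<Rightarrow> real\<close> vanishing outside \<open>P_N = {1..N}\<close>.
  The topology is the (product) topology of the ambient type; for N = 0 the
  vectors are the zero functions, so triples \<open>(w,0,0)\<close> represent \<open>\<complex>\<close>.\<close>

definition PN :: "nat \<Rightarrow> nat set" where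
  "PN N = {1..N}"

definition ambient :: "nat \<Rightarrow> (complex \<times> (nat \<Rightarrow> complex) \<times> (nat \<Rightarrow> real)) set" where
  "ambient N = {(w, a, \<theta>). (\<forall>l. l \<notin> PN N \<longrightarrow> a l = 0) \<and> (\<forall>l. l \<notin> PN N \<longrightarrow> \<theta> l = 0)}"

definition Ccone :: "complex set" where
  "Ccone = {z. Re z > 0 \<or> (Re z = 0 \<and> Im z > 0)}"

definition Tr :: "(nat \<Rightarrow> complex) \<Rightarrow> nat set \<Rightarrow> complex" where
  "Tr v L = (\<Sum>l\<in>L. v l)"

definition preimg :: "nat \<Rightarrow> (nat \<Rightarrow> 'a) \<Rightarrow> 'a set \<Rightarrow> nat set" where
  "preimg N v S = {l \<in> PN N. v l \<in> S}"

definition DD :: "nat \<Rightarrow> (complex \<times> (nat \<Rightarrow> complex) \<times> (nat \<Rightarrow> real)) set" where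
  "DD N = {(w, a, \<theta>). (w, a, \<theta>) \<in> ambient N \<and>
      preimg N a {0} \<subseteq> preimg N \<theta> (- \<int>)}"

definition pimap :: "nat \<Rightarrow> complex \<times> (nat \<Rightarrow> complex) \<times> (nat \<Rightarrow> real) \<Rightarrow> complex" where
  "pimap N x = (case x of (w, a, \<theta>) \<Rightarrow> w - Tr a (preimg N a (uminus ` Ccone)))"

definition Dcal :: "nat \<Rightarrow> (complex \<times> (nat \<Rightarrow> complex) \<times> (nat \<Rightarrow> real)) set" where
  "Dcal N = {(w, a, \<theta>). (w, a, \<theta>) \<in> DD N \<and> Re (pimap N (w, a, \<theta>)) > 0 \<and>
      (\<forall>l\<in>PN N. \<not> (Re (a l) = 0 \<and> Im (a l) \<noteq> 0))}"

definition Dint :: "nat \<Rightarrow> (complex \<times> (nat \<Rightarrow> complex) \<times> (nat \<Rightarrow> real)) set" where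
  "Dint N = (subtopology euclidean (ambient N)) interior_of (Dcal N)"

definition phi :: "nat \<Rightarrow> nat set \<Rightarrow> nat \<Rightarrow> nat" where
  "phi N L k = sorted_list_of_set (PN N - L) ! (k - 1)"

definition hat :: "nat \<Rightarrow> nat set \<Rightarrow> (nat \<Rightarrow> 'a::zero) \<Rightarrow> (nat \<Rightarrow> 'a)" where
  "hat N L v = (\<lambda>k. if k \<in> PN (N - card L) then v (phi N L k) else 0)"

definition piL :: "nat \<Rightarrow> nat set \<Rightarrow> complex \<times> (nat \<Rightarrow> complex) \<times> (nat \<Rightarrow> real)
    \<Rightarrow> complex \<times> (nat \<Rightarrow> complex) \<times> (nat \<Rightarrow> real)" where
  "piL N L x = (if L = {} then x
     else if L = PN N then (pimap N x, (\<lambda>_. 0), (\<lambda>_. 0))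
     else (case x of (w, a, \<theta>) \<Rightarrow>
       (w - Tr a (L \<inter> preimg N a (uminus ` Ccone)), hat N L a, hat N L \<theta>)))"

end

theory Submission
  imports Defs
begin


lemma card_PN[simp]: "card (PN N) = N" and finite_PN[simp]: "finite (PN N)"
  by (auto simp: PN_def)

lemma mono_unique:
  fixes f :: "nat \<Rightarrow> nat"
  assumes fin: "finite S" and sm: "strict_mono_on {1..m} f" and im: "f ` {1..m} = S"
    and k: "k \<in> {1..m}"
  shows "f k = sorted_list_of_set S ! (k - 1)"
proof -
  define ys where "ys = map (\<lambda>i. f (i + 1)) [0..<m]"
  have inj: "inj_on f {1..m}" using sm strict_mono_on_imp_inj_on by blast
  have "card S = m" using im inj card_image by fastforce
  moreover have "sorted_wrt (<) ys"
    unfolding sorted_wrt_iff_nth_less ys_def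
    by (auto intro!: sm[THEN strict_mono_onD])
  moreover have "set ys = S"
  proof -
    have "set ys = (\<lambda>i. f (i+1)) ` {0..<m}" by (simp add: ys_def)
    also have "\<dots> = f ` ((\<lambda>i. i+1) ` {0..<m})" by (simp only: image_image)
    also have "(\<lambda>i. i+1) ` {0..<m} = {1..m}"
      by (auto simp: image_iff intro!: bexI[where x="_ - 1"])
    finally show ?thesis using im by simp
  qed
  ultimately have "sorted_list_of_set S = ys"
    using sorted_list_of_set_unique[OF fin, of ys] by (simp add: ys_def)
  moreover have "k - 1 < m" "Suc (k - 1) = k" using k by auto
  ultimately show ?thesis by (simp add: ys_def)
qed

lemma card_PN_diff: "L \<subseteq> PN N \<Longrightarrow> card (PN N - L) = N - card L"
  by (simp add: card_Diff_subset finite_subset)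

lemma phi_mem:
  assumes "L \<subseteq> PN N" "k \<in> PN (N - card L)"
  shows "phi N L k \<in> PN N - L"
proof -
  have "k - 1 < length (sorted_list_of_set (PN N - L))"
    using assms card_PN_diff[OF assms(1)] by (auto simp: PN_def)
  then show ?thesis unfolding phi_def
    by (metis finite_Diff finite_PN nth_mem set_sorted_list_of_set)
qed

lemma phi_smono:
  assumes "L \<subseteq> PN N"
  shows "strict_mono_on (PN (N - card L)) (phi N L)"
proof (rule strict_mono_onI)
  fix r s assume rs: "r \<in> PN (N - card L)" "s \<in> PN (N - card L)" "r < s"
  have "s - 1 < length (sorted_list_of_set (PN N - L))" "r - 1 < s - 1"
    using rs card_PN_diff[OF assms(1)] by (auto simp: PN_def)
  then show "phi N L r < phi N L s" unfolding phi_def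
    using sorted_wrt_nth_less[OF strict_sorted_list_of_set] by blast
qed

lemma phi_image:
  assumes "L \<subseteq> PN N"
  shows "phi N L ` PN (N - card L) = PN N - L"
proof
  show "phi N L ` PN (N - card L) \<subseteq> PN N - L" using phi_mem[OF assms] by auto
  show "PN N - L \<subseteq> phi N L ` PN (N - card L)"
  proof
    fix j assume j: "j \<in> PN N - L"
    then obtain i where i: "i < length (sorted_list_of_set (PN N - L))"
      "sorted_list_of_set (PN N - L) ! i = j"
      by (metis finite_Diff finite_PN in_set_conv_nth set_sorted_list_of_set)
    then have "Suc i \<in> PN (N - card L)" "phi N L (Suc i) = j"
      using card_PN_diff[OF assms] by (auto simp: PN_def phi_def)
    then show "j \<in> phi N L ` PN (N - card L)" by force
  qed
qed

lemma phi_inj: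
  assumes "L \<subseteq> PN N"
  shows "inj_on (phi N L) (PN (N - card L))"
  using phi_smono[OF assms] strict_mono_on_imp_inj_on by blast

lemma phi_unique:
  assumes "L \<subseteq> PN N" "strict_mono_on (PN m) f" "f ` PN m = PN N - L" "k \<in> PN m"
  shows "f k = phi N L k"
  using mono_unique[of "PN N - L" m f k] assms by (simp add: PN_def phi_def)

lemma phi_empty: "k \<in> PN N \<Longrightarrow> phi N {} k = k"
  using phi_unique[of "{}" N N "\<lambda>x. x" k] by (auto simp: strict_mono_on_def)

lemma phi_comp:
  assumes L: "L \<subseteq> PN N" and l: "l \<subseteq> PN (N - card L)"
  defines "L' \<equiv> phi N L ` l \<union> L"
  shows "L' \<subseteq> PN N" "card L' = card l + card L"
    "N - card L' = N - card L - card l"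
    "k \<in> PN (N - card L - card l) \<Longrightarrow> phi N L (phi (N - card L) l k) = phi N L' k"
proof -
  let ?M = "N - card L"
  have im: "phi N L ` l \<subseteq> PN N - L" using phi_mem[OF L] l by auto
  then show L'sub: "L' \<subseteq> PN N" using L by (auto simp: L'_def)
  have inj: "inj_on (phi N L) l" using phi_inj[OF L] l inj_on_subset by blast
  have fl: "finite l" using l finite_subset finite_PN by blast
  have fL: "finite L" using L finite_subset finite_PN by blast
  have "card L' = card (phi N L ` l) + card L"
    unfolding L'_def using im fl fL by (intro card_Un_disjoint) auto
  then show cL': "card L' = card l + card L" using card_image[OF inj] by simp
  have "card l \<le> ?M" using l card_mono[OF finite_PN l] by simp
  then show "N - card L' = N - card L - card l" using cL' by simp
  assume k: "k \<in> PN (N - card L - card l)"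
  let ?f = "\<lambda>k. phi N L (phi ?M l k)"
  have sm: "strict_mono_on (PN (?M - card l)) ?f"
  proof (rule strict_mono_onI)
    fix r s assume rs: "r \<in> PN (?M - card l)" "s \<in> PN (?M - card l)" "r < s"
    have "phi ?M l r \<in> PN ?M" "phi ?M l s \<in> PN ?M" "phi ?M l r < phi ?M l s"
      using phi_mem[OF l] rs phi_smono[OF l] by (auto dest: strict_mono_onD)
    then show "?f r < ?f s" using phi_smono[OF L] by (auto dest: strict_mono_onD)
  qed
  have "?f ` PN (?M - card l) = phi N L ` (phi ?M l ` PN (?M - card l))" by (simp add: image_image)
  also have "\<dots> = phi N L ` (PN ?M - l)" using phi_image[OF l] by simp
  also have "\<dots> = phi N L ` PN ?M - phi N L ` l"
    using phi_inj[OF L] l by (intro inj_on_image_set_diff) auto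
  also have "\<dots> = PN N - L'" using phi_image[OF L] by (auto simp: L'_def)
  finally have "?f ` PN (?M - card l) = PN N - L'" .
  then show "?f k = phi N L' k" using phi_unique[OF L'sub sm] k by blast
qed

definition G :: "nat \<Rightarrow> nat set \<Rightarrow> complex \<times> (nat \<Rightarrow> complex) \<times> (nat \<Rightarrow> real)
    \<Rightarrow> complex \<times> (nat \<Rightarrow> complex) \<times> (nat \<Rightarrow> real)" where
  "G N L x = (case x of (w, a, \<theta>) \<Rightarrow>
       (w - Tr a (L \<inter> preimg N a (uminus ` Ccone)), hat N L a, hat N L \<theta>))"

lemma hat_empty: "(\<forall>l. l \<notin> PN N \<longrightarrow> v l = 0) \<Longrightarrow> hat N {} v = v"
  by (auto simp: hat_def phi_empty)

lemma hat_full: "hat N (PN N) v = (\<lambda>_. 0)"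
  by (auto simp: hat_def PN_def)

lemma piL_G: "L \<subseteq> PN N \<Longrightarrow> x \<in> ambient N \<Longrightarrow> piL N L x = G N L x"
  by (auto simp: piL_def G_def ambient_def hat_empty hat_full pimap_def Tr_def preimg_def
      split: prod.splits intro!: arg_cong[where f="sum _"])

lemma G_ambient: "G N L x \<in> ambient (N - card L)"
  by (auto simp: G_def ambient_def hat_def split: prod.splits)

lemma hat_comp:
  assumes L: "L \<subseteq> PN N" and l: "l \<subseteq> PN (N - card L)"
  shows "hat (N - card L) l (hat N L v) = hat N (phi N L ` l \<union> L) v"
proof
  fix k
  show "hat (N - card L) l (hat N L v) k = hat N (phi N L ` l \<union> L) v k"
  proof (cases "k \<in> PN (N - card L - card l)")
    case True
    have "phi (N - card L) l k \<in> PN (N - card L)" using phi_mem[OF l] True by auto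
    then show ?thesis using True phi_comp[OF L l] by (simp add: hat_def)
  next
    case False
    then show ?thesis using phi_comp[OF L l] by (simp add: hat_def)
  qed
qed

lemma G_comp:
  assumes L: "L \<subseteq> PN N" and l: "l \<subseteq> PN (N - card L)"
  shows "G (N - card L) l (G N L x) = G N (phi N L ` l \<union> L) x"
proof -
  obtain w a \<theta> where x: "x = (w, a, \<theta>)" by (cases x) auto
  let ?C = "uminus ` Ccone"
  let ?M = "N - card L"
  have fL: "finite L" using L finite_subset finite_PN by blast
  have fl: "finite l" using l finite_subset finite_PN by blast
  have im: "phi N L ` l \<subseteq> PN N - L" using phi_mem[OF L] l by auto
  have inj: "inj_on (phi N L) l" using phi_inj[OF L] l inj_on_subset by blast
  have set_eq: "l \<inter> preimg ?M (hat N L a) ?C = {k \<in> l. a (phi N L k) \<in> ?C}"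
    using l by (auto simp: preimg_def hat_def)
  have "Tr (hat N L a) (l \<inter> preimg ?M (hat N L a) ?C) = (\<Sum>k\<in>{k \<in> l. a (phi N L k) \<in> ?C}. a (phi N L k))"
    unfolding Tr_def set_eq using l by (intro sum.cong) (auto simp: hat_def)
  also have "\<dots> = (\<Sum>j\<in>phi N L ` {k \<in> l. a (phi N L k) \<in> ?C}. a j)"
    using inj by (subst sum.reindex) (auto intro: inj_on_subset)
  also have "phi N L ` {k \<in> l. a (phi N L k) \<in> ?C} = phi N L ` l \<inter> preimg N a ?C"
    using im by (auto simp: preimg_def)
  finally have t2: "Tr (hat N L a) (l \<inter> preimg ?M (hat N L a) ?C) = Tr a (phi N L ` l \<inter> preimg N a ?C)"
    by (simp add: Tr_def)
  have "Tr a ((phi N L ` l \<union> L) \<inter> preimg N a ?C) = Tr a (L \<inter> preimg N a ?C) + Tr a (phi N L ` l \<inter> preimg N a ?C)"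
    unfolding Tr_def Int_Un_distrib2 using im fL fl
    by (subst sum.union_disjoint) auto
  then show ?thesis
    using t2 hat_comp[OF L l, of a] hat_comp[OF L l, of \<theta>]
    by (simp add: G_def x algebra_simps)
qed

lemma pimap_G: "pimap N x = fst (G N (PN N) x)"
  by (auto simp: pimap_def G_def preimg_def split: prod.splits intro!: arg_cong[where f="Tr _"])

lemma pimap_comp:
  assumes L: "L \<subseteq> PN N"
  shows "pimap (N - card L) (G N L x) = pimap N x"
proof -
  have "phi N L ` PN (N - card L) \<union> L = PN N" using phi_image[OF L] L by auto
  then show ?thesis using G_comp[OF L order_refl] by (simp add: pimap_G)
qed



lemma half_not_int: "(1/2::real) \<notin> \<int>"
proof
  assume "(1/2::real) \<in> \<int>"
  then obtain n :: int where "1/2 = real_of_int n" by (auto elim: Ints_cases)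
  then have "1 = 2 * real_of_int n" by simp
  then have "1 = 2 * n" by linarith
  then show False by presburger
qed

lemma zero_notin_negC: "(0::complex) \<notin> uminus ` Ccone"
  by (auto simp: Ccone_def)

definition ext :: "nat \<Rightarrow> nat set \<Rightarrow> complex \<times> (nat \<Rightarrow> complex) \<times> (nat \<Rightarrow> real)
    \<Rightarrow> complex \<times> (nat \<Rightarrow> complex) \<times> (nat \<Rightarrow> real)" where
  "ext N L y = (case y of (w, b, \<eta>) \<Rightarrow>
     (w, (\<lambda>j. if j \<in> PN N - L then b (inv_into (PN (N - card L)) (phi N L) j) else 0),
         (\<lambda>j. if j \<in> PN N - L then \<eta> (inv_into (PN (N - card L)) (phi N L) j)
              else if j \<in> L then 1/2 else 0)))"

lemma ext_ambient: "L \<subseteq> PN N \<Longrightarrow> ext N L y \<in> ambient N"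
  by (auto simp: ext_def ambient_def split: prod.splits)

lemma inv_phi:
  assumes L: "L \<subseteq> PN N" and j: "j \<in> PN N - L"
  shows "inv_into (PN (N - card L)) (phi N L) j \<in> PN (N - card L)"
    "phi N L (inv_into (PN (N - card L)) (phi N L) j) = j"
  using phi_image[OF L] j by (auto intro: inv_into_into f_inv_into_f)

lemma G_ext:
  assumes L: "L \<subseteq> PN N" and y: "y \<in> ambient (N - card L)"
  shows "G N L (ext N L y) = y"
proof -
  obtain w b \<eta> where yy: "y = (w, b, \<eta>)" by (cases y) auto
  let ?M = "N - card L"
  have hb: "hat N L (\<lambda>j. if j \<in> PN N - L then b (inv_into (PN ?M) (phi N L) j) else 0) = b"
  proof
    fix k show "hat N L (\<lambda>j. if j \<in> PN N - L then b (inv_into (PN ?M) (phi N L) j) else 0) k = b k"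
      using y phi_mem[OF L, of k] inv_into_f_f[OF phi_inj[OF L], of k]
      by (auto simp: hat_def yy ambient_def)
  qed
  have he: "hat N L (\<lambda>j. if j \<in> PN N - L then \<eta> (inv_into (PN ?M) (phi N L) j)
              else if j \<in> L then 1/2 else 0) = \<eta>"
  proof
    fix k show "hat N L (\<lambda>j. if j \<in> PN N - L then \<eta> (inv_into (PN ?M) (phi N L) j)
              else if j \<in> L then 1/2 else 0) k = \<eta> k"
      using y phi_mem[OF L, of k] inv_into_f_f[OF phi_inj[OF L], of k]
      by (auto simp: hat_def yy ambient_def)
  qed
  have "Tr (\<lambda>j. if j \<in> PN N - L then b (inv_into (PN ?M) (phi N L) j) else 0)
      (L \<inter> preimg N (\<lambda>j. if j \<in> PN N - L then b (inv_into (PN ?M) (phi N L) j) else 0) (uminus ` Ccone)) = 0"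
    unfolding Tr_def by (intro sum.neutral) auto
  then show ?thesis using hb he by (simp add: G_def ext_def yy)
qed

lemma ext_zero:
  assumes L: "L \<subseteq> PN N" and y: "y = (w, b, \<eta>)" and "ext N L y = (w', a, \<theta>)"
    and j: "j \<in> PN N"
  shows "a j = (if j \<in> L then 0 else b (inv_into (PN (N - card L)) (phi N L) j))"
    "\<theta> j = (if j \<in> L then 1/2 else \<eta> (inv_into (PN (N - card L)) (phi N L) j))"
    "w' = w"
  using assms by (auto simp: ext_def)

definition E :: "nat \<Rightarrow> (complex \<times> (nat \<Rightarrow> complex) \<times> (nat \<Rightarrow> real)) set" where
  "E M = {x \<in> ambient M. (\<forall>k\<in>PN M. Re (fst (snd x) k) \<noteq> 0) \<and> Re (pimap M x) > 0}"

lemma ext_DD: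
  assumes L: "L \<subseteq> PN N" and y: "y \<in> DD (N - card L)"
  shows "ext N L y \<in> DD N"
proof -
  obtain w b \<eta> where yy: "y = (w, b, \<eta>)" by (cases y) auto
  obtain w' a \<theta> where xx: "ext N L y = (w', a, \<theta>)" by (cases "ext N L y") auto
  have "\<theta> j \<notin> \<int>" if "j \<in> PN N" "a j = 0" for j
  proof (cases "j \<in> L")
    case True
    then have "\<theta> j = 1/2" using ext_zero[OF L yy xx that(1)] by simp
    then show ?thesis using half_not_int by metis
  next
    case False
    then have "j \<in> PN N - L" using that by auto
    note i = inv_phi[OF L this]
    show ?thesis using ext_zero[OF L yy xx that(1)] False that y i(1)
      by (auto simp: DD_def yy preimg_def)
  qed
  then show ?thesis using ext_ambient[OF L, of y] xx by (auto simp: DD_def preimg_def)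
qed

lemma G_DD:
  assumes L: "L \<subseteq> PN N" and x: "x \<in> DD N"
  shows "G N L x \<in> DD (N - card L)"
proof -
  obtain w a \<theta> where xx: "x = (w, a, \<theta>)" by (cases x) auto
  have "hat N L \<theta> k \<notin> \<int>" if "k \<in> PN (N - card L)" "hat N L a k = 0" for k
    using that x phi_mem[OF L that(1)] by (auto simp: hat_def DD_def xx preimg_def)
  then show ?thesis using G_ambient[of N L x] by (auto simp: DD_def preimg_def G_def xx)
qed

lemma ext_Dcal:
  assumes L: "L \<subseteq> PN N" and y: "y \<in> Dcal (N - card L)"
  shows "ext N L y \<in> Dcal N"
proof -
  obtain w b \<eta> where yy: "y = (w, b, \<eta>)" by (cases y) auto
  obtain w' a \<theta> where xx: "ext N L y = (w', a, \<theta>)" by (cases "ext N L y") auto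
  have dd: "ext N L y \<in> DD N" using ext_DD[OF L] y by (auto simp: Dcal_def)
  have "pimap N (ext N L y) = pimap (N - card L) y" using pimap_comp[OF L, of "ext N L y"] G_ext[OF L] y
    by (auto simp: Dcal_def DD_def)
  then have re: "Re (pimap N (ext N L y)) > 0" using y by (auto simp: Dcal_def)
  have "\<not> (Re (a j) = 0 \<and> Im (a j) \<noteq> 0)" if "j \<in> PN N" for j
  proof (cases "j \<in> L")
    case True then show ?thesis using ext_zero[OF L yy xx that(1)] by simp
  next
    case False
    then have "j \<in> PN N - L" using that by auto
    note i = inv_phi[OF L this]
    show ?thesis using ext_zero[OF L yy xx that(1)] False y i(1) by (auto simp: Dcal_def yy)
  qed
  then show ?thesis using dd re xx by (auto simp: Dcal_def)
qed

lemma G_Dcal: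
  assumes L: "L \<subseteq> PN N" and x: "x \<in> Dcal N"
  shows "G N L x \<in> Dcal (N - card L)"
proof -
  obtain w a \<theta> where xx: "x = (w, a, \<theta>)" by (cases x) auto
  have dd: "G N L x \<in> DD (N - card L)" using G_DD[OF L] x by (auto simp: Dcal_def)
  have re: "Re (pimap (N - card L) (G N L x)) > 0" using pimap_comp[OF L] x by (auto simp: Dcal_def)
  have "\<not> (Re (hat N L a k) = 0 \<and> Im (hat N L a k) \<noteq> 0)" if "k \<in> PN (N - card L)" for k
    using that x phi_mem[OF L that(1)] by (auto simp: hat_def Dcal_def xx)
  then show ?thesis using dd re by (auto simp: Dcal_def G_def xx)
qed

lemma ext_E:
  assumes L: "L \<subseteq> PN N" and y: "y \<in> E (N - card L)"
  shows "ext N L y \<in> {(w, a, \<theta>) \<in> Dcal N. preimg N a {0} = L}"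
proof -
  obtain w b \<eta> where yy: "y = (w, b, \<eta>)" by (cases y) auto
  obtain w' a \<theta> where xx: "ext N L y = (w', a, \<theta>)" by (cases "ext N L y") auto
  have yD: "y \<in> Dcal (N - card L)"
    using y by (auto simp: E_def Dcal_def DD_def preimg_def yy)
  have "a j = 0 \<longleftrightarrow> j \<in> L" if "j \<in> PN N" for j
  proof (cases "j \<in> L")
    case True then show ?thesis using ext_zero[OF L yy xx that(1)] by simp
  next
    case False
    then have "j \<in> PN N - L" using that by auto
    note i = inv_phi[OF L this]
    show ?thesis using ext_zero[OF L yy xx that(1)] False y i(1) by (auto simp: E_def yy)
  qed
  then have "preimg N a {0} = L" using L by (auto simp: preimg_def)
  then show ?thesis using ext_Dcal[OF L yD] xx by auto
qed

lemma G_E: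
  assumes L: "L \<subseteq> PN N" and x: "x \<in> {(w, a, \<theta>) \<in> Dcal N. preimg N a {0} = L}"
  shows "G N L x \<in> E (N - card L)"
proof -
  obtain w a \<theta> where xx: "x = (w, a, \<theta>)" by (cases x) auto
  have D: "G N L x \<in> Dcal (N - card L)" using G_Dcal[OF L] x by auto
  have "Re (hat N L a k) \<noteq> 0" if "k \<in> PN (N - card L)" for k
  proof -
    have m: "phi N L k \<in> PN N - L" using phi_mem[OF L that] .
    then have "a (phi N L k) \<noteq> 0" using x by (auto simp: xx preimg_def)
    then show ?thesis using m x that by (auto simp: hat_def Dcal_def xx complex_eq_iff)
  qed
  then show ?thesis using D by (auto simp: E_def Dcal_def DD_def G_def xx)
qed



lemma negC_iff: "z \<in> uminus ` Ccone \<longleftrightarrow> Re z < 0 \<or> (Re z = 0 \<and> Im z < 0)"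
proof
  assume "z \<in> uminus ` Ccone" then show "Re z < 0 \<or> (Re z = 0 \<and> Im z < 0)"
    by (auto simp: Ccone_def)
next
  assume "Re z < 0 \<or> (Re z = 0 \<and> Im z < 0)"
  then have "-z \<in> Ccone" by (auto simp: Ccone_def)
  then show "z \<in> uminus ` Ccone" by (metis image_eqI minus_minus)
qed

lemma Re_pimap: "Re (pimap N x) = Re (fst x) - (\<Sum>l\<in>PN N. min (Re (fst (snd x) l)) 0)"
proof -
  obtain w a \<theta> where xx: "x = (w, a, \<theta>)" by (cases x) auto
  have "Re (pimap N x) = Re w - (\<Sum>l\<in>preimg N a (uminus ` Ccone). Re (a l))"
    by (simp add: pimap_def xx Tr_def)
  also have "(\<Sum>l\<in>preimg N a (uminus ` Ccone). Re (a l)) =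
     (\<Sum>l\<in>PN N. if a l \<in> uminus ` Ccone then Re (a l) else 0)"
    unfolding preimg_def by (simp add: sum.inter_filter)
  also have "\<dots> = (\<Sum>l\<in>PN N. min (Re (a l)) 0)"
    by (intro sum.cong refl) (auto simp: negC_iff)
  finally show ?thesis by (simp add: xx)
qed

lemma cont_coord: "continuous_on S (\<lambda>x::complex \<times> (nat \<Rightarrow> complex) \<times> (nat \<Rightarrow> real). fst (snd x) l)"
  by (rule continuous_on_product_then_coordinatewise) (intro continuous_intros)

lemma cont_Re_pimap: "continuous_on S (\<lambda>x. Re (pimap N x))"
  unfolding Re_pimap by (intro continuous_intros cont_coord)

definition hneg :: "complex \<Rightarrow> complex" where
  "hneg z = (if Re z < 0 then z else 0)"

lemma cont_hneg: "continuous_on {z. Re z \<noteq> 0 \<or> z = 0} hneg"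
proof (rule continuous_on_eq_continuous_within[THEN iffD2], intro ballI)
  fix z assume z: "z \<in> {z. Re z \<noteq> 0 \<or> z = 0}"
  show "continuous (at z within {z. Re z \<noteq> 0 \<or> z = 0}) hneg"
  proof (cases "Re z < 0")
    case True
    have "\<forall>\<^sub>F x in nhds z. hneg x = x"
      using eventually_nhds_in_open[OF open_halfspace_Re_lt, of z 0] True
      by (auto elim!: eventually_mono simp: hneg_def)
    then have "isCont hneg z" using isCont_cong[of hneg "\<lambda>x. x" z] by simp
    then show ?thesis by (rule continuous_at_imp_continuous_at_within)
  next
    case False
    show ?thesis
    proof (cases "Re z > 0")
      case True
      have "\<forall>\<^sub>F x in nhds z. hneg x = 0"
        using eventually_nhds_in_open[OF open_halfspace_Re_gt, of z 0] True
        by (auto elim!: eventually_mono simp: hneg_def)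
      then have "isCont hneg z" using isCont_cong[of hneg "\<lambda>x. 0" z] by simp
      then show ?thesis by (rule continuous_at_imp_continuous_at_within)
    next
      case False
      then have z0: "z = 0" using z \<open>\<not> Re z < 0\<close> by auto
      have "(hneg \<longlongrightarrow> 0) (at 0 within {z. Re z \<noteq> 0 \<or> z = 0})"
        by (rule Lim_null_comparison[where g=norm])
           (auto simp: hneg_def intro!: always_eventually tendsto_norm_zero tendsto_ident_at)
      then show ?thesis unfolding continuous_within z0 by (simp add: hneg_def)
    qed
  qed
qed

lemma cont_hat:
  assumes "continuous_on S f"
  shows "continuous_on S (\<lambda>x. hat N L (f x :: nat \<Rightarrow> 'a::{zero,topological_space}))"
proof (rule continuous_on_coordinatewise_then_product)
  fix k
  show "continuous_on S (\<lambda>x. hat N L (f x) k)"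
    using continuous_on_product_then_coordinatewise[OF assms]
    by (cases "k \<in> PN (N - card L)") (auto simp: hat_def)
qed

lemma cont_G:
  assumes L: "L \<subseteq> PN N"
  shows "continuous_on (Dcal N) (G N L)"
proof -
  have eq: "G N L x = (fst x - (\<Sum>l\<in>L. hneg (fst (snd x) l)), hat N L (fst (snd x)), hat N L (snd (snd x)))"
    if x: "x \<in> Dcal N" for x
  proof -
    obtain w a \<theta> where xx: "x = (w, a, \<theta>)" by (cases x) auto
    have "Tr a (L \<inter> preimg N a (uminus ` Ccone)) = (\<Sum>l\<in>L. if a l \<in> uminus ` Ccone then a l else 0)"
      unfolding Tr_def preimg_def using L
    proof -
      have fL: "finite L" using L finite_subset finite_PN by blast
      have "L \<inter> {l \<in> PN N. a l \<in> uminus ` Ccone} = {l \<in> L. a l \<in> uminus ` Ccone}" using L by auto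
      then show "sum a (L \<inter> {l \<in> PN N. a l \<in> uminus ` Ccone}) =
         (\<Sum>l\<in>L. if a l \<in> uminus ` Ccone then a l else 0)"
        using sum.inter_filter[OF fL, of a] by simp
    qed
    also have "\<dots> = (\<Sum>l\<in>L. hneg (a l))"
    proof (intro sum.cong refl)
      fix l assume "l \<in> L"
      then have "l \<in> PN N" using L by auto
      then have "\<not> (Re (a l) = 0 \<and> Im (a l) \<noteq> 0)" using x by (auto simp: Dcal_def xx)
      then show "(if a l \<in> uminus ` Ccone then a l else 0) = hneg (a l)"
        by (auto simp: negC_iff hneg_def)
    qed
    finally show ?thesis by (simp add: G_def xx)
  qed
  have sub: "(\<lambda>x. fst (snd x) l) ` Dcal N \<subseteq> {z. Re z \<noteq> 0 \<or> z = 0}" for l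
  proof
    fix z assume "z \<in> (\<lambda>x. fst (snd x) l) ` Dcal N"
    then obtain w a \<theta> where x: "(w, a, \<theta>) \<in> Dcal N" and z: "z = a l" by auto
    show "z \<in> {z. Re z \<noteq> 0 \<or> z = 0}"
    proof (cases "l \<in> PN N")
      case True then show ?thesis using x z by (auto simp: Dcal_def complex_eq_iff)
    next
      case False then show ?thesis using x z by (auto simp: Dcal_def DD_def ambient_def)
    qed
  qed
  have "continuous_on (Dcal N) (\<lambda>x. (fst x - (\<Sum>l\<in>L. hneg (fst (snd x) l)), hat N L (fst (snd x)), hat N L (snd (snd x))))"
  proof (intro continuous_on_Pair cont_hat continuous_on_diff continuous_on_sum)
    show "continuous_on (Dcal N) fst" by (rule continuous_on_fst[OF continuous_on_id])
    show "continuous_on (Dcal N) (\<lambda>x. fst (snd x))" by (intro continuous_intros)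
    show "continuous_on (Dcal N) (\<lambda>x. snd (snd x))" by (intro continuous_intros)
    show "continuous_on (Dcal N) (\<lambda>x. hneg (fst (snd x) l))" if "l \<in> L" for l
      by (rule continuous_on_compose2[OF cont_hneg cont_coord sub])
  qed
  then show ?thesis by (rule continuous_on_eq) (simp add: eq)
qed


lemma E_sub: "E M \<subseteq> Dcal M"
proof
  fix x assume "x \<in> E M"
  then obtain w b \<eta> where xx: "x = (w, b, \<eta>)" and a: "x \<in> ambient M"
    and r: "\<forall>k\<in>PN M. Re (b k) \<noteq> 0" and p: "Re (pimap M x) > 0"
    by (cases x) (auto simp: E_def)
  have "preimg M b {0} = {}" using r by (auto simp: preimg_def)
  then show "x \<in> Dcal M" using a r p by (simp add: xx Dcal_def DD_def)
qed

lemma E_open: "openin (subtopology euclidean (ambient M)) (E M)"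
proof -
  let ?U = "(\<Inter>k\<in>PN M. (\<lambda>x. Re (fst (snd x) k)) -` (-{0})) \<inter> (\<lambda>x. Re (pimap M x)) -` {0<..}"
  have o1: "open ((\<lambda>x::complex \<times> (nat \<Rightarrow> complex) \<times> (nat \<Rightarrow> real). Re (fst (snd x) k)) -` (-{0}))" for k
    by (rule open_vimage[OF open_Compl[OF closed_singleton] continuous_on_Re[OF cont_coord]])
  have o2: "open ((\<lambda>x. Re (pimap M x)) -` {0<..})"
    by (rule open_vimage[OF open_greaterThan cont_Re_pimap])
  have "open ?U" by (intro open_Int open_INT o2 ballI o1 finite_PN)
  then have "openin (subtopology euclidean (ambient M)) (ambient M \<inter> ?U)"
    by (intro openin_subtopology_Int2 open_openin[THEN iffD1])
  moreover have "ambient M \<inter> ?U = E M" by (auto simp: E_def)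
  ultimately show ?thesis by simp
qed

lemma Dint_eq: "Dint M = E M"
proof
  show "E M \<subseteq> Dint M" unfolding Dint_def by (intro interior_of_maximal E_sub E_open)
  show "Dint M \<subseteq> E M"
  proof
    fix x assume "x \<in> Dint M"
    then obtain T where T: "openin (subtopology euclidean (ambient M)) T" "x \<in> T" "T \<subseteq> Dcal M"
      unfolding Dint_def interior_of_def by auto
    then obtain U where U: "open U" "T = U \<inter> ambient M"
      using T(1)[unfolded openin_open] by blast
    obtain w b \<eta> where xx: "x = (w, b, \<eta>)" by (cases x) auto
    have xD: "x \<in> Dcal M" using T by auto
    have "Re (b k) \<noteq> 0" if k: "k \<in> PN M" for k
    proof
      assume re: "Re (b k) = 0"
      then have b0: "b k = 0" using xD k by (auto simp: Dcal_def xx complex_eq_iff)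
      define g where "g t = (w, b(k := \<i> * complex_of_real t), \<eta>)" for t :: real
      have gc: "continuous_on UNIV g"
        unfolding g_def
      proof (intro continuous_on_Pair continuous_on_const continuous_on_coordinatewise_then_product)
        fix j show "continuous_on UNIV (\<lambda>t. (b(k := \<i> * complex_of_real t)) j)"
          by (cases "j = k") (simp_all, intro continuous_intros)
      qed
      have "open (g -` U)" by (rule open_vimage[OF U(1) gc])
      moreover have "0 \<in> g -` U"
      proof -
        have "b(k := 0) = b" using b0 by auto
        then show ?thesis using T U by (simp add: g_def xx)
      qed
      ultimately obtain e where e: "e > 0" "ball 0 e \<subseteq> g -` U" by (meson openE)
      moreover have "e/2 \<in> ball 0 e" using e by (simp add: dist_real_def)
      ultimately have "g (e/2) \<in> U" by blast
      moreover have "g (e/2) \<in> ambient M" using xD k by (auto simp: g_def xx Dcal_def DD_def ambient_def)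
      ultimately have "g (e/2) \<in> Dcal M" using T U by auto
      then show False using k e by (auto simp: g_def Dcal_def)
    qed
    then show "x \<in> E M" using xD by (auto simp: E_def Dcal_def DD_def xx)
  qed
qed



theorem proposition4:
  fixes N :: nat and L :: "nat set"
  assumes "L \<subseteq> PN N"
  shows "(\<forall>l. l \<subseteq> PN (N - card L) \<longrightarrow>
            (\<forall>x\<in>DD N. piL (N - card L) l (piL N L x) = piL N (phi N L ` l \<union> L) x))
       \<and> piL N L ` DD N = DD (N - card L)
       \<and> continuous_on (Dcal N) (piL N L)
       \<and> piL N L ` Dcal N = Dcal (N - card L)
       \<and> piL N L ` {(w, a, \<theta>) \<in> Dcal N. preimg N a {0} = L} = Dint (N - card L)
       \<and> continuous_on (DD N) (\<lambda>x. Re (pimap N x))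
       \<and> (\<lambda>x. Re (pimap N x)) ` DD N = UNIV"
proof -
  note L = assms
  let ?M = "N - card L"
  have DDa: "x \<in> ambient n" if "x \<in> DD n" for x n using that by (auto simp: DD_def)
  have Dcala: "x \<in> ambient n" if "x \<in> Dcal n" for x n using that by (auto simp: Dcal_def DD_def)
  have p1: "\<forall>l. l \<subseteq> PN ?M \<longrightarrow>
            (\<forall>x\<in>DD N. piL ?M l (piL N L x) = piL N (phi N L ` l \<union> L) x)"
  proof (intro allI impI ballI)
    fix l x assume l: "l \<subseteq> PN ?M" and x: "x \<in> DD N"
    have xa: "x \<in> ambient N" using DDa[OF x] .
    have "piL ?M l (piL N L x) = G ?M l (G N L x)"
      using piL_G[OF L xa] piL_G[OF l G_ambient] by simp
    also have "\<dots> = G N (phi N L ` l \<union> L) x" by (rule G_comp[OF L l])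
    also have "\<dots> = piL N (phi N L ` l \<union> L) x" using piL_G[OF phi_comp(1)[OF L l] xa] by simp
    finally show "piL ?M l (piL N L x) = piL N (phi N L ` l \<union> L) x" .
  qed
  have p2: "piL N L ` DD N = DD ?M"
  proof
    show "piL N L ` DD N \<subseteq> DD ?M" using piL_G[OF L DDa] G_DD[OF L] by auto
    show "DD ?M \<subseteq> piL N L ` DD N"
    proof
      fix y assume y: "y \<in> DD ?M"
      have "y = piL N L (ext N L y)"
        using G_ext[OF L DDa[OF y]] piL_G[OF L ext_ambient[OF L]] by simp
      then show "y \<in> piL N L ` DD N" using ext_DD[OF L y] by blast
    qed
  qed
  have p3: "continuous_on (Dcal N) (piL N L)"
    by (rule continuous_on_eq[OF cont_G[OF L]]) (simp add: piL_G[OF L Dcala])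
  have p4: "piL N L ` Dcal N = Dcal ?M"
  proof
    show "piL N L ` Dcal N \<subseteq> Dcal ?M" using piL_G[OF L Dcala] G_Dcal[OF L] by auto
    show "Dcal ?M \<subseteq> piL N L ` Dcal N"
    proof
      fix y assume y: "y \<in> Dcal ?M"
      have "y = piL N L (ext N L y)"
        using G_ext[OF L Dcala[OF y]] piL_G[OF L ext_ambient[OF L]] by simp
      then show "y \<in> piL N L ` Dcal N" using ext_Dcal[OF L y] by blast
    qed
  qed
  have p5: "piL N L ` {(w, a, \<theta>) \<in> Dcal N. preimg N a {0} = L} = Dint ?M"
    unfolding Dint_eq
  proof (rule equalityI; rule subsetI)
    fix y assume "y \<in> piL N L ` {(w, a, \<theta>) \<in> Dcal N. preimg N a {0} = L}"
    then obtain x where x: "x \<in> {(w, a, \<theta>) \<in> Dcal N. preimg N a {0} = L}" and yx: "y = piL N L x"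
      by (rule imageE)
    have "x \<in> Dcal N" using x by (cases x) simp
    then have "piL N L x = G N L x" using piL_G[OF L Dcala] by blast
    then show "y \<in> E ?M" using yx G_E[OF L x] by simp
  next
    fix y assume y: "y \<in> E ?M"
    have "y \<in> ambient ?M" using y by (simp add: E_def)
    then have "G N L (ext N L y) = y" by (rule G_ext[OF L])
    then have "y = piL N L (ext N L y)"
      using piL_G[OF L ext_ambient[OF L]] by simp
    then show "y \<in> piL N L ` {(w, a, \<theta>) \<in> Dcal N. preimg N a {0} = L}"
      using ext_E[OF L y] by (rule image_eqI)
  qed
  have p7: "(\<lambda>x. Re (pimap N x)) ` DD N = UNIV"
  proof (rule set_eqI, rule iffI)
    fix r :: real
    let ?x = "(complex_of_real r, (\<lambda>_. 0) :: nat \<Rightarrow> complex, (\<lambda>j. if j \<in> PN N then 1/2 else 0) :: nat \<Rightarrow> real)"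
    have "?x \<in> ambient N" by (simp add: ambient_def)
    moreover have "preimg N (\<lambda>_. 0::complex) {0} \<subseteq> preimg N (\<lambda>j. if j \<in> PN N then 1/2 else 0::real) (- \<int>)"
    proof
      fix j assume "j \<in> preimg N (\<lambda>_. 0::complex) {0}"
      then have j: "j \<in> PN N" by (simp add: preimg_def)
      then show "j \<in> preimg N (\<lambda>j. if j \<in> PN N then 1/2 else 0::real) (- \<int>)"
        using half_not_int by (simp add: preimg_def)
    qed
    ultimately have xD: "?x \<in> DD N" by (simp add: DD_def)
    have "r = Re (pimap N ?x)" by (simp add: Re_pimap)
    then show "r \<in> (\<lambda>x. Re (pimap N x)) ` DD N" by (rule rev_image_eqI[OF xD])
  qed simp
  show ?thesis by (intro conjI p1 p2 p3 p4 p5 p7 cont_Re_pimap)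
qed


end
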